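(* Let $G\cong\mathbb Z/2\mathbb Z\times\mathbb Z/2\mathbb Z$ with generators $\sigma_1,\sigma_2$, and let $M$ be a $\mathbb Z[G]$-module, written multiplicatively, such that $(M,\sigma_1,\sigma_2)$ satisfies QH90. Then \[\ker(1-\sigma_1)(1-\sigma_2)=\ker(1-\sigma_1)\cdot\ker(1-\sigma_2)\] if and only if the following holds: for all $m_1,m_2\in M$ satisfying (1) $(1+\sigma_1)\cdot m_1=1=(1+\sigma_2)\cdot m_2$ and (2) $m_1\,\sigma_1(m_2)=m_2\,\sigma_2(m_1)$, there exists $n\in M$ with $m_i=(1-\sigma_i)\cdot n$ for $i=1,2$.
   Context: The module action is written multiplicatively: for $c_g\in\mathbb Z$, $(\sum_g c_g g)\cdot m=\prod_g g(m)^{c_g}$; e.g. $(1+\sigma_i)\cdot m=m\,\sigma_i(m)$ and $(1-\sigma_i)\cdot m=m/\sigma_i(m)$, where $1$ denotes the identity of $G$ (as an element of $\mathbb Z[G]$), and the identity of $M$ is also written $1$. For $x\in\mathbb Z[G]$, $\ker x=\{m\in M: x\cdot m=1\}$. For subsets $A,B\subseteq M$, $A\cdot B=\{ab:a\in A,b\in B\}$. $(M,\sigma_1,\sigma_2)$ satisfies QH90 means: for each $i\in\{1,2\}$ and $m\in M$, if $(1+\sigma_i)\cdot m=1$ then there exists $n\in M$ with $m=(1-\sigma_i)\cdot n$. *)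

theory Defs
  imports "HOL-Algebra.Algebra"
begin

text \<open>A Z[G]-module for G = Z/2 x Z/2 with generators s1, s2, written multiplicatively:
  an abelian group M on which s1, s2 act by group endomorphisms with
  s1^2 = s2^2 = id and s1 s2 = s2 s1.\<close>
definition klein_module :: "('a, 'b) monoid_scheme \<Rightarrow> ('a \<Rightarrow> 'a) \<Rightarrow> ('a \<Rightarrow> 'a) \<Rightarrow> bool" where
  "klein_module M s1 s2 \<longleftrightarrow> comm_group M \<and> s1 \<in> hom M M \<and> s2 \<in> hom M M \<and>
     (\<forall>m \<in> carrier M. s1 (s1 m) = m \<and> s2 (s2 m) = m \<and> s1 (s2 m) = s2 (s1 m))"

definition one_minus :: "('a, 'b) monoid_scheme \<Rightarrow> ('a \<Rightarrow> 'a) \<Rightarrow> 'a \<Rightarrow> 'a" where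
  "one_minus M s m = m \<otimes>\<^bsub>M\<^esub> inv\<^bsub>M\<^esub> (s m)"

definition one_plus :: "('a, 'b) monoid_scheme \<Rightarrow> ('a \<Rightarrow> 'a) \<Rightarrow> 'a \<Rightarrow> 'a" where
  "one_plus M s m = m \<otimes>\<^bsub>M\<^esub> s m"

definition QH90 :: "('a, 'b) monoid_scheme \<Rightarrow> ('a \<Rightarrow> 'a) \<Rightarrow> ('a \<Rightarrow> 'a) \<Rightarrow> bool" where
  "QH90 M s1 s2 \<longleftrightarrow> (\<forall>s \<in> {s1, s2}. \<forall>m \<in> carrier M.
      one_plus M s m = \<one>\<^bsub>M\<^esub> \<longrightarrow> (\<exists>n \<in> carrier M. m = one_minus M s n))"

definition ker1 :: "('a, 'b) monoid_scheme \<Rightarrow> ('a \<Rightarrow> 'a) \<Rightarrow> 'a set" where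
  "ker1 M s = {m \<in> carrier M. one_minus M s m = \<one>\<^bsub>M\<^esub>}"

definition ker12 :: "('a, 'b) monoid_scheme \<Rightarrow> ('a \<Rightarrow> 'a) \<Rightarrow> ('a \<Rightarrow> 'a) \<Rightarrow> 'a set" where
  "ker12 M s1 s2 = {m \<in> carrier M. one_minus M s1 (one_minus M s2 m) = \<one>\<^bsub>M\<^esub>}"

end

theory Submission
  imports Defs
begin

context comm_group begin
lemma cx_0a: "x \<in> carrier G \<Longrightarrow> r \<in> carrier G \<Longrightarrow> x \<otimes> (inv x \<otimes> r) = r" by (simp add: m_assoc[symmetric])
lemma cx_0b: "x \<in> carrier G \<Longrightarrow> x \<otimes> inv x = \<one>" by simp
lemma cx_1a: assumes "x \<in> carrier G" "r \<in> carrier G" "y1 \<in> carrier G" shows "x \<otimes> (y1 \<otimes> ((inv x \<otimes> r))) = y1 \<otimes> r"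
  using assms by (subst m_lcomm) (simp_all add: cx_0a)
lemma cx_1b: assumes "x \<in> carrier G" "y1 \<in> carrier G" shows "x \<otimes> (y1 \<otimes> (inv x)) = y1"
  using assms by (subst m_lcomm) (simp_all add: cx_0b)
lemma cx_2a: assumes "x \<in> carrier G" "r \<in> carrier G" "y1 \<in> carrier G" "y2 \<in> carrier G" shows "x \<otimes> (y1 \<otimes> (y2 \<otimes> ((inv x \<otimes> r)))) = y1 \<otimes> (y2 \<otimes> r)"
  using assms by (subst m_lcomm) (simp_all add: cx_1a)
lemma cx_2b: assumes "x \<in> carrier G" "y1 \<in> carrier G" "y2 \<in> carrier G" shows "x \<otimes> (y1 \<otimes> (y2 \<otimes> (inv x))) = y1 \<otimes> y2"
  using assms by (subst m_lcomm) (simp_all add: cx_1b)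
lemma cx_3a: assumes "x \<in> carrier G" "r \<in> carrier G" "y1 \<in> carrier G" "y2 \<in> carrier G" "y3 \<in> carrier G" shows "x \<otimes> (y1 \<otimes> (y2 \<otimes> (y3 \<otimes> ((inv x \<otimes> r))))) = y1 \<otimes> (y2 \<otimes> (y3 \<otimes> r))"
  using assms by (subst m_lcomm) (simp_all add: cx_2a)
lemma cx_3b: assumes "x \<in> carrier G" "y1 \<in> carrier G" "y2 \<in> carrier G" "y3 \<in> carrier G" shows "x \<otimes> (y1 \<otimes> (y2 \<otimes> (y3 \<otimes> (inv x)))) = y1 \<otimes> (y2 \<otimes> y3)"
  using assms by (subst m_lcomm) (simp_all add: cx_2b)
lemma cx_4a: assumes "x \<in> carrier G" "r \<in> carrier G" "y1 \<in> carrier G" "y2 \<in> carrier G" "y3 \<in> carrier G" "y4 \<in> carrier G" shows "x \<otimes> (y1 \<otimes> (y2 \<otimes> (y3 \<otimes> (y4 \<otimes> ((inv x \<otimes> r)))))) = y1 \<otimes> (y2 \<otimes> (y3 \<otimes> (y4 \<otimes> r)))"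
  using assms by (subst m_lcomm) (simp_all add: cx_3a)
lemma cx_4b: assumes "x \<in> carrier G" "y1 \<in> carrier G" "y2 \<in> carrier G" "y3 \<in> carrier G" "y4 \<in> carrier G" shows "x \<otimes> (y1 \<otimes> (y2 \<otimes> (y3 \<otimes> (y4 \<otimes> (inv x))))) = y1 \<otimes> (y2 \<otimes> (y3 \<otimes> y4))"
  using assms by (subst m_lcomm) (simp_all add: cx_3b)
lemma cx_5a: assumes "x \<in> carrier G" "r \<in> carrier G" "y1 \<in> carrier G" "y2 \<in> carrier G" "y3 \<in> carrier G" "y4 \<in> carrier G" "y5 \<in> carrier G" shows "x \<otimes> (y1 \<otimes> (y2 \<otimes> (y3 \<otimes> (y4 \<otimes> (y5 \<otimes> ((inv x \<otimes> r))))))) = y1 \<otimes> (y2 \<otimes> (y3 \<otimes> (y4 \<otimes> (y5 \<otimes> r))))"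
  using assms by (subst m_lcomm) (simp_all add: cx_4a)
lemma cx_5b: assumes "x \<in> carrier G" "y1 \<in> carrier G" "y2 \<in> carrier G" "y3 \<in> carrier G" "y4 \<in> carrier G" "y5 \<in> carrier G" shows "x \<otimes> (y1 \<otimes> (y2 \<otimes> (y3 \<otimes> (y4 \<otimes> (y5 \<otimes> (inv x)))))) = y1 \<otimes> (y2 \<otimes> (y3 \<otimes> (y4 \<otimes> y5)))"
  using assms by (subst m_lcomm) (simp_all add: cx_4b)
lemma cx_6a: assumes "x \<in> carrier G" "r \<in> carrier G" "y1 \<in> carrier G" "y2 \<in> carrier G" "y3 \<in> carrier G" "y4 \<in> carrier G" "y5 \<in> carrier G" "y6 \<in> carrier G" shows "x \<otimes> (y1 \<otimes> (y2 \<otimes> (y3 \<otimes> (y4 \<otimes> (y5 \<otimes> (y6 \<otimes> ((inv x \<otimes> r)))))))) = y1 \<otimes> (y2 \<otimes> (y3 \<otimes> (y4 \<otimes> (y5 \<otimes> (y6 \<otimes> r)))))"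
  using assms by (subst m_lcomm) (simp_all add: cx_5a)
lemma cx_6b: assumes "x \<in> carrier G" "y1 \<in> carrier G" "y2 \<in> carrier G" "y3 \<in> carrier G" "y4 \<in> carrier G" "y5 \<in> carrier G" "y6 \<in> carrier G" shows "x \<otimes> (y1 \<otimes> (y2 \<otimes> (y3 \<otimes> (y4 \<otimes> (y5 \<otimes> (y6 \<otimes> (inv x))))))) = y1 \<otimes> (y2 \<otimes> (y3 \<otimes> (y4 \<otimes> (y5 \<otimes> y6))))"
  using assms by (subst m_lcomm) (simp_all add: cx_5b)
lemma cx_7a: assumes "x \<in> carrier G" "r \<in> carrier G" "y1 \<in> carrier G" "y2 \<in> carrier G" "y3 \<in> carrier G" "y4 \<in> carrier G" "y5 \<in> carrier G" "y6 \<in> carrier G" "y7 \<in> carrier G" shows "x \<otimes> (y1 \<otimes> (y2 \<otimes> (y3 \<otimes> (y4 \<otimes> (y5 \<otimes> (y6 \<otimes> (y7 \<otimes> ((inv x \<otimes> r))))))))) = y1 \<otimes> (y2 \<otimes> (y3 \<otimes> (y4 \<otimes> (y5 \<otimes> (y6 \<otimes> (y7 \<otimes> r))))))"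
  using assms by (subst m_lcomm) (simp_all add: cx_6a)
lemma cx_7b: assumes "x \<in> carrier G" "y1 \<in> carrier G" "y2 \<in> carrier G" "y3 \<in> carrier G" "y4 \<in> carrier G" "y5 \<in> carrier G" "y6 \<in> carrier G" "y7 \<in> carrier G" shows "x \<otimes> (y1 \<otimes> (y2 \<otimes> (y3 \<otimes> (y4 \<otimes> (y5 \<otimes> (y6 \<otimes> (y7 \<otimes> (inv x)))))))) = y1 \<otimes> (y2 \<otimes> (y3 \<otimes> (y4 \<otimes> (y5 \<otimes> (y6 \<otimes> y7)))))"
  using assms by (subst m_lcomm) (simp_all add: cx_6b)
lemmas cx = cx_0a cx_0b cx_1a cx_1b cx_2a cx_2b cx_3a cx_3b cx_4a cx_4b cx_5a cx_5b cx_6a cx_6b cx_7a cx_7b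
end

locale kmod = comm_group +
  fixes s1 s2 :: "'a \<Rightarrow> 'a"
  assumes h1: "s1 \<in> hom G G" and h2: "s2 \<in> hom G G"
    and i1: "\<And>m. m \<in> carrier G \<Longrightarrow> s1 (s1 m) = m"
    and i2: "\<And>m. m \<in> carrier G \<Longrightarrow> s2 (s2 m) = m"
    and c12: "\<And>m. m \<in> carrier G \<Longrightarrow> s1 (s2 m) = s2 (s1 m)"
begin

lemma s1c[simp]: "x \<in> carrier G \<Longrightarrow> s1 x \<in> carrier G" using h1 by (simp add: hom_in_carrier)
lemma s2c[simp]: "x \<in> carrier G \<Longrightarrow> s2 x \<in> carrier G" using h2 by (simp add: hom_in_carrier)
lemma s1m[simp]: "x \<in> carrier G \<Longrightarrow> y \<in> carrier G \<Longrightarrow> s1 (x \<otimes> y) = s1 x \<otimes> s1 y" using h1 by (simp add: hom_mult)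
lemma s2m[simp]: "x \<in> carrier G \<Longrightarrow> y \<in> carrier G \<Longrightarrow> s2 (x \<otimes> y) = s2 x \<otimes> s2 y" using h2 by (simp add: hom_mult)
lemma s1i[simp]: "x \<in> carrier G \<Longrightarrow> s1 (inv x) = inv (s1 x)"
proof -
  interpret group_hom G G s1 by (unfold_locales) (rule h1)
  show "x \<in> carrier G \<Longrightarrow> s1 (inv x) = inv (s1 x)" by simp
qed
lemma s2i[simp]: "x \<in> carrier G \<Longrightarrow> s2 (inv x) = inv (s2 x)"
proof -
  interpret group_hom G G s2 by (unfold_locales) (rule h2)
  show "x \<in> carrier G \<Longrightarrow> s2 (inv x) = inv (s2 x)" by simp
qed
lemma s1o[simp]: "s1 \<one> = \<one>"
proof -
  interpret group_hom G G s1 by (unfold_locales) (rule h1)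
  show ?thesis by simp
qed
lemma s2o[simp]: "s2 \<one> = \<one>"
proof -
  interpret group_hom G G s2 by (unfold_locales) (rule h2)
  show ?thesis by simp
qed
declare i1[simp] i2[simp] c12[simp]

lemma rinv1: "x \<in> carrier G \<Longrightarrow> y \<in> carrier G \<Longrightarrow> x \<otimes> inv y = \<one> \<longleftrightarrow> x = y"
  by (metis inv_equality inv_inv inv_closed r_inv)

lemma forward:
  assumes eq: "ker12 G s1 s2 = ker1 G s1 <#> ker1 G s2"
    and q1: "\<And>m. m \<in> carrier G \<Longrightarrow> m \<otimes> s1 m = \<one> \<Longrightarrow> \<exists>n\<in>carrier G. m = n \<otimes> inv (s1 n)"
    and q2: "\<And>m. m \<in> carrier G \<Longrightarrow> m \<otimes> s2 m = \<one> \<Longrightarrow> \<exists>n\<in>carrier G. m = n \<otimes> inv (s2 n)"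
    and m1c: "m1 \<in> carrier G" and m2c: "m2 \<in> carrier G"
    and p1: "m1 \<otimes> s1 m1 = \<one>" and p2: "m2 \<otimes> s2 m2 = \<one>"
    and cc: "m1 \<otimes> s1 m2 = m2 \<otimes> s2 m1"
  shows "\<exists>n\<in>carrier G. m1 = n \<otimes> inv (s1 n) \<and> m2 = n \<otimes> inv (s2 n)"
proof -
  obtain a where ac: "a \<in> carrier G" and am: "m1 = a \<otimes> inv (s1 a)" using q1 m1c p1 by blast
  define m2' where "m2' = m2 \<otimes> inv (a \<otimes> inv (s2 a))"
  have m2'c: "m2' \<in> carrier G" using m2c ac by (simp add: m2'_def)
  have sm2: "s1 m2 = inv m1 \<otimes> (m2 \<otimes> s2 m1)"
    using cc m1c m2c by (metis cx_0a inv_closed s1c inv_inv)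
  have fix1: "s1 m2' = m2'"
    unfolding m2'_def using ac m2c by (simp add: sm2 am inv_mult m_ac cx)
  have op2: "m2' \<otimes> s2 m2' = \<one>"
  proof -
    have "m2' \<otimes> s2 m2' = m2 \<otimes> s2 m2"
      unfolding m2'_def using ac m2c by (simp add: inv_mult m_ac cx)
    then show ?thesis using p2 by simp
  qed
  obtain b where bc: "b \<in> carrier G" and bm: "m2' = b \<otimes> inv (s2 b)" using q2 m2'c op2 by blast
  have "b \<in> ker12 G s1 s2"
    unfolding ker12_def one_minus_def using bc bm[symmetric] fix1 m2'c by simp
  then have "b \<in> ker1 G s1 <#> ker1 G s2" using eq by simp
  then obtain c d where cc1: "c \<in> ker1 G s1" and dd: "d \<in> ker1 G s2" and bcd: "b = c \<otimes> d"
    unfolding set_mult_def by blast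
  have cC: "c \<in> carrier G" and sc: "s1 c = c" using cc1 unfolding ker1_def one_minus_def
    by (auto simp: rinv1)
  have dC: "d \<in> carrier G" and sd: "s2 d = d" using dd unfolding ker1_def one_minus_def
    by (auto simp: rinv1)
  have m2'e: "m2' = c \<otimes> inv (s2 c)" using bm bcd cC dC sd by (simp add: inv_mult m_ac cx)
  have m2e: "m2 = m2' \<otimes> (a \<otimes> inv (s2 a))" unfolding m2'_def using ac m2c
    by (simp add: inv_mult m_ac cx)
  show ?thesis
  proof (intro bexI conjI)
    show "a \<otimes> c \<in> carrier G" using ac cC by simp
    show "m1 = a \<otimes> c \<otimes> inv (s1 (a \<otimes> c))" using am ac cC sc by (simp add: inv_mult m_ac cx)
    show "m2 = a \<otimes> c \<otimes> inv (s2 (a \<otimes> c))" using m2e m2'e ac cC by (simp add: inv_mult m_ac cx)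
  qed
qed

lemma backward:
  assumes P: "\<forall>m1 \<in> carrier G. \<forall>m2 \<in> carrier G.
       m1 \<otimes> s1 m1 = \<one> \<and> m2 \<otimes> s2 m2 = \<one> \<and> m1 \<otimes> s1 m2 = m2 \<otimes> s2 m1
       \<longrightarrow> (\<exists>n \<in> carrier G. m1 = n \<otimes> inv (s1 n) \<and> m2 = n \<otimes> inv (s2 n))"
  shows "ker12 G s1 s2 = ker1 G s1 <#> ker1 G s2"
proof
  show "ker12 G s1 s2 \<subseteq> ker1 G s1 <#> ker1 G s2"
  proof
    fix m assume "m \<in> ker12 G s1 s2"
    then have mc: "m \<in> carrier G" and k: "m \<otimes> inv (s2 m) \<otimes> inv (s1 (m \<otimes> inv (s2 m))) = \<one>"
      unfolding ker12_def one_minus_def by auto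
    define x where "x = m \<otimes> inv (s2 m)"
    have xc: "x \<in> carrier G" using mc by (simp add: x_def)
    have sx: "s1 x = x" using k xc unfolding x_def[symmetric] by (simp add: rinv1)
    have ox: "x \<otimes> s2 x = \<one>" unfolding x_def using mc by (simp add: inv_mult m_ac cx)
    obtain n where nc: "n \<in> carrier G" and n1: "\<one> = n \<otimes> inv (s1 n)" and n2: "x = n \<otimes> inv (s2 n)"
    proof -
      have "\<one> \<otimes> s1 \<one> = \<one> \<and> x \<otimes> s2 x = \<one> \<and> \<one> \<otimes> s1 x = x \<otimes> s2 \<one>"
        using ox sx xc by simp
      then show ?thesis using P xc that by blast
    qed
    have "n \<in> ker1 G s1" unfolding ker1_def one_minus_def using nc n1 by simp
    moreover have "inv n \<otimes> m \<in> ker1 G s2"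
    proof -
      have "inv n \<otimes> m \<otimes> inv (s2 (inv n \<otimes> m)) = inv (n \<otimes> inv (s2 n)) \<otimes> x"
        unfolding x_def using nc mc by (simp add: inv_mult m_ac cx)
      also have "\<dots> = \<one>" using n2 xc by simp
      finally show ?thesis unfolding ker1_def one_minus_def using nc mc by simp
    qed
    moreover have "m = n \<otimes> (inv n \<otimes> m)" using nc mc by (simp add: cx)
    ultimately show "m \<in> ker1 G s1 <#> ker1 G s2" unfolding set_mult_def by blast
  qed
  show "ker1 G s1 <#> ker1 G s2 \<subseteq> ker12 G s1 s2"
  proof
    fix m assume "m \<in> ker1 G s1 <#> ker1 G s2"
    then obtain c d where cc1: "c \<in> ker1 G s1" and dd: "d \<in> ker1 G s2" and mcd: "m = c \<otimes> d"
      unfolding set_mult_def by blast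
    have cC: "c \<in> carrier G" and sc: "s1 c = c" using cc1 unfolding ker1_def one_minus_def
      by (auto simp: rinv1)
    have dC: "d \<in> carrier G" and sd: "s2 d = d" using dd unfolding ker1_def one_minus_def
      by (auto simp: rinv1)
    have "s1 (s2 c) = s2 c" using cC sc by (metis c12)
    then show "m \<in> ker12 G s1 s2" unfolding ker12_def one_minus_def mcd using cC dC sc sd
      by (simp add: inv_mult m_ac cx)
  qed
qed

end

theorem theorem3:
  fixes M :: "('a, 'b) monoid_scheme" and s1 s2 :: "'a \<Rightarrow> 'a"
  assumes "klein_module M s1 s2"
    and "QH90 M s1 s2"
  shows "ker12 M s1 s2 = ker1 M s1 <#>\<^bsub>M\<^esub> ker1 M s2 \<longleftrightarrow>
    (\<forall>m1 \<in> carrier M. \<forall>m2 \<in> carrier M.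
       one_plus M s1 m1 = \<one>\<^bsub>M\<^esub> \<and> one_plus M s2 m2 = \<one>\<^bsub>M\<^esub> \<and>
       m1 \<otimes>\<^bsub>M\<^esub> s1 m2 = m2 \<otimes>\<^bsub>M\<^esub> s2 m1
       \<longrightarrow> (\<exists>n \<in> carrier M. m1 = one_minus M s1 n \<and> m2 = one_minus M s2 n))"
proof -
  interpret kmod M s1 s2
    using assms(1) unfolding klein_module_def kmod_def kmod_axioms_def by blast
  have q1: "\<And>m. m \<in> carrier M \<Longrightarrow> m \<otimes>\<^bsub>M\<^esub> s1 m = \<one>\<^bsub>M\<^esub> \<Longrightarrow> \<exists>n\<in>carrier M. m = n \<otimes>\<^bsub>M\<^esub> inv\<^bsub>M\<^esub> (s1 n)"
    using assms(2) unfolding QH90_def one_plus_def one_minus_def by blast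
  have q2: "\<And>m. m \<in> carrier M \<Longrightarrow> m \<otimes>\<^bsub>M\<^esub> s2 m = \<one>\<^bsub>M\<^esub> \<Longrightarrow> \<exists>n\<in>carrier M. m = n \<otimes>\<^bsub>M\<^esub> inv\<^bsub>M\<^esub> (s2 n)"
    using assms(2) unfolding QH90_def one_plus_def one_minus_def by blast
  show ?thesis
    unfolding one_plus_def one_minus_def
  proof
    assume eq: "ker12 M s1 s2 = ker1 M s1 <#>\<^bsub>M\<^esub> ker1 M s2"
    show "\<forall>m1 \<in> carrier M. \<forall>m2 \<in> carrier M.
       m1 \<otimes>\<^bsub>M\<^esub> s1 m1 = \<one>\<^bsub>M\<^esub> \<and> m2 \<otimes>\<^bsub>M\<^esub> s2 m2 = \<one>\<^bsub>M\<^esub> \<and>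
       m1 \<otimes>\<^bsub>M\<^esub> s1 m2 = m2 \<otimes>\<^bsub>M\<^esub> s2 m1
       \<longrightarrow> (\<exists>n \<in> carrier M. m1 = n \<otimes>\<^bsub>M\<^esub> inv\<^bsub>M\<^esub> (s1 n) \<and> m2 = n \<otimes>\<^bsub>M\<^esub> inv\<^bsub>M\<^esub> (s2 n))"
      using forward[OF eq q1 q2] by blast
  next
    assume P: "\<forall>m1 \<in> carrier M. \<forall>m2 \<in> carrier M.
       m1 \<otimes>\<^bsub>M\<^esub> s1 m1 = \<one>\<^bsub>M\<^esub> \<and> m2 \<otimes>\<^bsub>M\<^esub> s2 m2 = \<one>\<^bsub>M\<^esub> \<and>
       m1 \<otimes>\<^bsub>M\<^esub> s1 m2 = m2 \<otimes>\<^bsub>M\<^esub> s2 m1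
       \<longrightarrow> (\<exists>n \<in> carrier M. m1 = n \<otimes>\<^bsub>M\<^esub> inv\<^bsub>M\<^esub> (s1 n) \<and> m2 = n \<otimes>\<^bsub>M\<^esub> inv\<^bsub>M\<^esub> (s2 n))"
    show "ker12 M s1 s2 = ker1 M s1 <#>\<^bsub>M\<^esub> ker1 M s2" by (rule backward[OF P])
  qed
qed

end
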